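(* Let $R$ be a finite set of terminal pairs in $\mathbb{R}^2$ such that every pair $(l,r)\in R$ satisfies $x(l)<0\le x(r)$, let $N_{\mathrm{opt}}$ be an optimum solution of 2D-GMMN for $R$, and let $N^{+}_{\mathrm{hor}}$ be the set of horizontal segments of the right part of $N_{\mathrm{opt}}$. Let $(P_x)_{x\ge0}$ be the piercings produced by the sweep described in the context. Then for every $x\ge 0$, $$|P_x|\le 2\cdot\Big|\ell_x\cap \bigcup N^{+}_{\mathrm{hor}}\Big|.$$
   Context: A rectilinear network is a finite union of axis-parallel segments; an M-path between $p,q$ is a path of axis-parallel segments of total length $\|p-q\|_1$. An optimum solution of 2D-GMMN for a set $R$ of unordered point pairs is a minimum-length rectilinear network containing an M-path between the two points of every pair. Each pair is identified with its bounding box (smallest axis-parallel rectangle containing both points). The right part of a geometric object is its intersection with the closed half-plane $\{x\ge 0\}$; the right part of a set of objects is the set of right parts; $R^+$ denotes the right part of (the bounding boxes of) $R$. For $x\ge0$, $\ell_x$ is the vertical line at abscissa $x$, and $\mathcal{I}_x$ is the set of (nonempty) intervals $\ell_x\cap r$, $r\in R^+$. A piercing of $\mathcal{I}_x$ is a finite set of points on $\ell_x$ such that every interval of $\mathcal{I}_x$ contains one of them; it is minimal if no proper subset is a piercing. The sweep: event points are the $x$-coordinates of the right edges of the rectangles in $R^+$. $P_0$ is an arbitrary minimal piercing of $\mathcal{I}_0$. For consecutive event points $x'<x''$ and $x'<x\le x''$, $P_x$ is obtained from (the horizontal translate to $\ell_x$ of) $P_{x'}$ by iteratively removing points as long as the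 remaining set still pierces $\mathcal{I}_x$, stopping when it is a minimal piercing of $\mathcal{I}_x$ (the same set of $y$-coordinates is used for all $x\in(x',x'']$). After the last event point, $\mathcal{I}_x=\emptyset$ and $P_x=\emptyset$. *)

theory Defs
  imports "HOL-Analysis.Analysis"
begin

type_synonym point = "real \<times> real"

definition l1 :: "point \<Rightarrow> point \<Rightarrow> real" where
  "l1 p q = \<bar>fst p - fst q\<bar> + \<bar>snd p - snd q\<bar>"

definition axis_par :: "point \<Rightarrow> point \<Rightarrow> bool" where
  "axis_par a b \<longleftrightarrow> fst a = fst b \<or> snd a = snd b"

definition rect_network :: "point set \<Rightarrow> bool" where
  "rect_network N \<longleftrightarrow> (\<exists>S. finite S \<and> (\<forall>(a,b)\<in>S. axis_par a b) \<and>
      N = (\<Union>(a,b)\<in>S. closed_segment a b))"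

text \<open>Length of a rectilinear network (= its 1-dimensional measure):
  the least total length of a finite family of axis-parallel segments whose union is N.\<close>
definition net_length :: "point set \<Rightarrow> real" where
  "net_length N = Inf {(\<Sum>(a,b)\<in>S. l1 a b) | S. finite S \<and> (\<forall>(a,b)\<in>S. axis_par a b) \<and>
      N = (\<Union>(a,b)\<in>S. closed_segment a b)}"

definition M_path :: "point set \<Rightarrow> point \<Rightarrow> point \<Rightarrow> point list \<Rightarrow> bool" where
  "M_path N p q vs \<longleftrightarrow> vs \<noteq> [] \<and> hd vs = p \<and> last vs = q \<and>
     (\<forall>i < length vs - 1. axis_par (vs!i) (vs!Suc i) \<and> closed_segment (vs!i) (vs!Suc i) \<subseteq> N) \<and>
     (\<Sum>i < length vs - 1. l1 (vs!i) (vs!Suc i)) = l1 p q"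

definition has_M_path :: "point set \<Rightarrow> point \<Rightarrow> point \<Rightarrow> bool" where
  "has_M_path N p q \<longleftrightarrow> (\<exists>vs. M_path N p q vs)"

definition feasible_GMMN :: "(point \<times> point) set \<Rightarrow> point set \<Rightarrow> bool" where
  "feasible_GMMN R N \<longleftrightarrow> rect_network N \<and> (\<forall>(p,q)\<in>R. has_M_path N p q)"

definition optimum_GMMN :: "(point \<times> point) set \<Rightarrow> point set \<Rightarrow> bool" where
  "optimum_GMMN R N \<longleftrightarrow> feasible_GMMN R N \<and>
     (\<forall>N'. feasible_GMMN R N' \<longrightarrow> net_length N \<le> net_length N')"

definition bbox :: "point \<times> point \<Rightarrow> point set" where
  "bbox pq = {z. min (fst (fst pq)) (fst (snd pq)) \<le> fst z \<and> fst z \<le> max (fst (fst pq)) (fst (snd pq)) \<and>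
                 min (snd (fst pq)) (snd (snd pq)) \<le> snd z \<and> snd z \<le> max (snd (fst pq)) (snd (snd pq))}"

definition right_part :: "point set \<Rightarrow> point set" where
  "right_part A = A \<inter> {z. 0 \<le> fst z}"

text \<open>The family I_x of nonempty intervals cut out of the right parts of the bounding boxes
  by the vertical line at abscissa x; intervals are represented by their sets of y-coordinates.\<close>
definition Ivals :: "(point \<times> point) set \<Rightarrow> real \<Rightarrow> real set set" where
  "Ivals R x = {{y. (x, y) \<in> right_part (bbox pq)} | pq. pq \<in> R} - {{}}"

text \<open>Piercings of a family of intervals on a vertical line (points given by their y-coordinates).\<close>
definition piercing :: "real set set \<Rightarrow> real set \<Rightarrow> bool" where
  "piercing I P \<longleftrightarrow> finite P \<and> (\<forall>J\<in>I. J \<inter> P \<noteq> {})"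

definition min_piercing :: "real set set \<Rightarrow> real set \<Rightarrow> bool" where
  "min_piercing I P \<longleftrightarrow> piercing I P \<and> (\<forall>Q. Q \<subset> P \<longrightarrow> \<not> piercing I Q)"

text \<open>Possible outcomes of iteratively removing points from P while it still pierces I,
  stopping when a minimal piercing is reached.\<close>
inductive reduce_piercing :: "real set set \<Rightarrow> real set \<Rightarrow> real set \<Rightarrow> bool" where
  stop: "min_piercing I P \<Longrightarrow> reduce_piercing I P P"
| step: "p \<in> P \<Longrightarrow> \<not> min_piercing I P \<Longrightarrow> piercing I (P - {p}) \<Longrightarrow>
         reduce_piercing I (P - {p}) Q \<Longrightarrow> reduce_piercing I P Q"

text \<open>Event points: x-coordinates of the right edges of the right parts of the boxes.\<close>
definition events :: "(point \<times> point) set \<Rightarrow> real set" where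
  "events R = {Sup (fst ` right_part (bbox pq)) | pq. pq \<in> R}"

text \<open>P is a run of the sweep for R (P x is the set of y-coordinates of P_x).
  The sweep starts at 0; breakpoints are 0 and the event points.\<close>
definition sweep :: "(point \<times> point) set \<Rightarrow> (real \<Rightarrow> real set) \<Rightarrow> bool" where
  "sweep R P \<longleftrightarrow>
     min_piercing (Ivals R 0) (P 0) \<and>
     (\<forall>x' x''. x' \<in> insert 0 (events R) \<and> x'' \<in> insert 0 (events R) \<and> x' < x'' \<and>
        \<not> (\<exists>e\<in>insert 0 (events R). x' < e \<and> e < x'') \<longrightarrow>
        (\<exists>Q. reduce_piercing (Ivals R x'') (P x') Q \<and> (\<forall>x. x' < x \<and> x \<le> x'' \<longrightarrow> P x = Q))) \<and>
     (\<forall>x. (\<forall>e\<in>insert 0 (events R). e < x) \<longrightarrow> P x = {})"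

definition hor_part :: "point set \<Rightarrow> point set" where
  "hor_part N = \<Union>{closed_segment a b | a b. snd a = snd b \<and> a \<noteq> b \<and> closed_segment a b \<subseteq> N}"

end

theory Submission
  imports Defs
begin

lemma crossing:
  fixes f :: "nat \<Rightarrow> real"
  assumes "f 0 < x" "x \<le> f n"
  shows "\<exists>i<n. f i < x \<and> x \<le> f (Suc i)"
  using assms
proof (induction n)
  case 0 then show ?case by simp
next
  case (Suc n)
  show ?case
  proof (cases "x \<le> f n")
    case True then show ?thesis using Suc by (metis less_Suc_eq)
  next
    case False then show ?thesis using Suc by (metis lessI not_le)
  qed
qed

lemma tele1:
  fixes f :: "nat \<Rightarrow> real"
  shows "\<bar>f i - f 0\<bar> \<le> (\<Sum>j<i. \<bar>f (Suc j) - f j\<bar>)"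
proof (induction i)
  case 0 then show ?case by simp
next
  case (Suc i) then show ?case by simp
qed

lemma tele2:
  fixes f :: "nat \<Rightarrow> real"
  shows "i \<le> n \<Longrightarrow> \<bar>f n - f i\<bar> \<le> (\<Sum>j\<in>{i..<n}. \<bar>f (Suc j) - f j\<bar>)"
proof (induction n)
  case 0 then show ?case by simp
next
  case (Suc n)
  show ?case
  proof (cases "i = Suc n")
    case True then show ?thesis by simp
  next
    case False
    then have "i \<le> n" using Suc by simp
    then show ?thesis using Suc by simp
  qed
qed

lemma seg_fst:
  fixes a b z :: point
  assumes "z \<in> closed_segment a b" "fst a = fst b"
  shows "fst z = fst a"
proof -
  obtain u where "z = (1-u) *\<^sub>R a + u *\<^sub>R b" using assms(1) unfolding closed_segment_def by blast
  then have "fst z = (1-u) * fst a + u * fst b" by simp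
  then show ?thesis using assms(2) by (simp add: algebra_simps)
qed

lemma seg_snd:
  fixes a b z :: point
  assumes "z \<in> closed_segment a b" "snd a = snd b"
  shows "snd z = snd a"
proof -
  obtain u where "z = (1-u) *\<^sub>R a + u *\<^sub>R b" using assms(1) unfolding closed_segment_def by blast
  then have "snd z = (1-u) * snd a + u * snd b" by simp
  then show ?thesis using assms(2) by (simp add: algebra_simps)
qed

lemma mpath_cross:
  assumes "M_path N p q vs" "fst p < x" "x \<le> fst q"
  shows "\<exists>y. (x,y) \<in> hor_part N \<and> min (snd p) (snd q) \<le> y \<and> y \<le> max (snd p) (snd q)"
proof -
  define n where "n = length vs - 1"
  define f where "f j = fst (vs!j)" for j
  define g where "g j = snd (vs!j)" for j
  have ne: "vs \<noteq> []" and hd: "hd vs = p" and la: "last vs = q"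
    and steps: "\<forall>i<n. axis_par (vs!i) (vs!Suc i) \<and> closed_segment (vs!i) (vs!Suc i) \<subseteq> N"
    and len: "(\<Sum>i<n. l1 (vs!i) (vs!Suc i)) = l1 p q"
    using assms(1) unfolding M_path_def n_def by auto
  have v0: "vs!0 = p" using ne hd by (simp add: hd_conv_nth)
  have vn: "vs!n = q" using ne la unfolding n_def by (simp add: last_conv_nth)
  obtain i where i: "i<n" "f i < x" "x \<le> f (Suc i)"
    using crossing[of f x n] assms(2,3) v0 vn unfolding f_def by auto
  define a where "a = vs!i"
  define b where "b = vs!Suc i"
  have ab: "axis_par a b" "closed_segment a b \<subseteq> N" using steps i(1) a_def b_def by auto
  have fab: "fst a < x" "x \<le> fst b" using i a_def b_def f_def by auto
  then have sab: "snd a = snd b" using ab(1) unfolding axis_par_def by auto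
  have anb: "a \<noteq> b" using fab by auto
  define u where "u = (x - fst a) / (fst b - fst a)"
  have u: "0 \<le> u" "u \<le> 1" using fab unfolding u_def by (auto simp: field_simps)
  have "(x, snd a) = (1-u) *\<^sub>R a + u *\<^sub>R b"
  proof -
    have "(1-u) * fst a + u * fst b = fst a + u * (fst b - fst a)" by (simp add: algebra_simps)
    also have "\<dots> = x" using fab unfolding u_def by simp
    finally show ?thesis using sab by (simp add: prod_eq_iff algebra_simps)
  qed
  then have zin: "(x, snd a) \<in> closed_segment a b" unfolding closed_segment_def using u by blast
  have hp: "(x, snd a) \<in> hor_part N" unfolding hor_part_def using zin sab anb ab(2) by blast
  have L: "(\<Sum>j<n. \<bar>f (Suc j) - f j\<bar>) + (\<Sum>j<n. \<bar>g (Suc j) - g j\<bar>) = \<bar>f n - f 0\<bar> + \<bar>g n - g 0\<bar>"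
    using len v0 vn unfolding l1_def f_def g_def by (simp add: sum.distrib abs_minus_commute)
  have "\<bar>f n - f 0\<bar> \<le> (\<Sum>j<n. \<bar>f (Suc j) - f j\<bar>)" by (rule tele1)
  then have G: "(\<Sum>j<n. \<bar>g (Suc j) - g j\<bar>) \<le> \<bar>g n - g 0\<bar>" using L by linarith
  have split: "(\<Sum>j<n. \<bar>g (Suc j) - g j\<bar>) = (\<Sum>j<i. \<bar>g (Suc j) - g j\<bar>) + (\<Sum>j\<in>{i..<n}. \<bar>g (Suc j) - g j\<bar>)"
    using i(1) by (metis less_imp_le_nat sum.atLeastLessThan_concat lessThan_atLeast0 zero_le)
  have "\<bar>g i - g 0\<bar> \<le> (\<Sum>j<i. \<bar>g (Suc j) - g j\<bar>)" by (rule tele1)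
  moreover have "\<bar>g n - g i\<bar> \<le> (\<Sum>j\<in>{i..<n}. \<bar>g (Suc j) - g j\<bar>)" using i(1) by (intro tele2) simp
  ultimately have "\<bar>g i - g 0\<bar> + \<bar>g n - g i\<bar> \<le> \<bar>g n - g 0\<bar>" using G split by linarith
  then have "min (g 0) (g n) \<le> g i \<and> g i \<le> max (g 0) (g n)" by (auto simp: abs_if split: if_splits)
  then show ?thesis using hp v0 vn unfolding g_def a_def by auto
qed

lemma finite_hor:
  assumes "rect_network N"
  shows "finite ({z. fst z = x} \<inter> hor_part N)"
proof -
  obtain S where S: "finite S" "\<forall>(a,b)\<in>S. axis_par a b" "N = (\<Union>(a,b)\<in>S. closed_segment a b)"
    using assms unfolding rect_network_def by blast
  have "{z. fst z = x} \<inter> hor_part N \<subseteq> {x} \<times> ((\<lambda>(a,b). snd a) ` S)"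
  proof
    fix z assume z: "z \<in> {z. fst z = x} \<inter> hor_part N"
    then obtain c d where cd: "z \<in> closed_segment c d" "snd c = snd d" "c \<noteq> d" "closed_segment c d \<subseteq> N"
      unfolding hor_part_def by blast
    have zs: "snd z = snd c" using seg_snd cd by blast
    have "snd c \<in> (\<lambda>(a,b). snd a) ` S"
    proof (rule ccontr)
      assume nin: "snd c \<notin> (\<lambda>(a,b). snd a) ` S"
      have sub: "\<forall>(a,b)\<in>S. finite (closed_segment c d \<inter> closed_segment a b)"
      proof (intro ballI, clarify)
        fix a b assume ab: "(a,b) \<in> S"
        have uni: "\<forall>u\<in>closed_segment c d \<inter> closed_segment a b. \<forall>v\<in>closed_segment c d \<inter> closed_segment a b. u = v"
        proof (intro ballI, rule ccontr)
          fix u v assume u: "u \<in> closed_segment c d \<inter> closed_segment a b" and v: "v \<in> closed_segment c d \<inter> closed_segment a b" and uv: "u \<noteq> v"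
          have "snd u = snd c" "snd v = snd c" using u v seg_snd cd(2) by blast+
          then have fuv: "fst u \<noteq> fst v" using uv by (simp add: prod_eq_iff)
          show False
          proof (cases "fst a = fst b")
            case True then show ?thesis using u v seg_fst fuv by (metis IntD2)
          next
            case False
            then have "snd a = snd b" using S(2) ab unfolding axis_par_def by auto
            then have "snd u = snd a" using u seg_snd by blast
            then show ?thesis using nin ab \<open>snd u = snd c\<close> by force
          qed
        qed
        show "finite (closed_segment c d \<inter> closed_segment a b)"
        proof (cases "closed_segment c d \<inter> closed_segment a b = {}")
          case True then show ?thesis by simp
        next
          case False
          then obtain w where "w \<in> closed_segment c d \<inter> closed_segment a b" by blast
          then have "closed_segment c d \<inter> closed_segment a b \<subseteq> {w}" using uni by blast
          then show ?thesis using finite_subset by blast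
        qed
      qed
      have "closed_segment c d = (\<Union>(a,b)\<in>S. closed_segment c d \<inter> closed_segment a b)"
        using cd(4) S(3) by blast
      moreover have "finite (\<Union>(a,b)\<in>S. closed_segment c d \<inter> closed_segment a b)"
        using S(1) sub by auto
      ultimately show False using cd(3) by simp
    qed
    then show "z \<in> {x} \<times> ((\<lambda>(a,b). snd a) ` S)" using z zs by (auto simp: mem_Times_iff)
  qed
  then show ?thesis using S(1) finite_subset by blast
qed

lemma minpierce_bound:
  fixes I :: "real set set"
  assumes mp: "min_piercing I P" and fH: "finite H" and hit: "\<forall>J\<in>I. J \<inter> H \<noteq> {}"
    and conv: "\<forall>J\<in>I. \<forall>a\<in>J. \<forall>b\<in>J. \<forall>c. a \<le> c \<and> c \<le> b \<longrightarrow> c \<in> J"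
  shows "card P \<le> 2 * card H"
proof -
  have pier: "piercing I P" and mini: "\<forall>Q. Q \<subset> P \<longrightarrow> \<not> piercing I Q" using mp unfolding min_piercing_def by auto
  have fP: "finite P" using pier unfolding piercing_def by auto
  have "\<forall>p\<in>P. \<exists>J\<in>I. J \<inter> P = {p}"
  proof
    fix p assume p: "p \<in> P"
    have "\<not> piercing I (P - {p})" using mini p by blast
    then obtain J where J: "J \<in> I" "J \<inter> (P - {p}) = {}" using fP unfolding piercing_def by auto
    have "J \<inter> P \<noteq> {}" using pier J(1) unfolding piercing_def by auto
    then have "J \<inter> P = {p}" using J(2) by blast
    then show "\<exists>J\<in>I. J \<inter> P = {p}" using J(1) by blast
  qed
  then obtain Jf where Jf: "\<forall>p\<in>P. Jf p \<in> I \<and> Jf p \<inter> P = {p}" by metis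
  have "\<forall>p\<in>P. \<exists>h. h \<in> Jf p \<inter> H" using Jf hit by blast
  then obtain h where h: "\<forall>p\<in>P. h p \<in> Jf p \<inter> H" by metis
  define F where "F p = (h p, p \<le> h p)" for p
  have inj: "inj_on F P"
  proof (rule inj_onI, rule ccontr)
    fix p q assume p: "p \<in> P" and q: "q \<in> P" and Fe: "F p = F q" and pq: "p \<noteq> q"
    have he: "h p = h q" and be: "(p \<le> h p) = (q \<le> h q)" using Fe unfolding F_def by auto
    have key: "\<And>p q. p \<in> P \<Longrightarrow> q \<in> P \<Longrightarrow> h p = h q \<Longrightarrow> (p \<le> h p) = (q \<le> h q) \<Longrightarrow> p < q \<Longrightarrow> False"
    proof -
      fix p q assume p: "p \<in> P" and q: "q \<in> P" and he: "h p = h q" and be: "(p \<le> h p) = (q \<le> h q)" and lt: "p < q"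
      show False
      proof (cases "p \<le> h p")
        case True
        then have "q \<le> h p" using be he by simp
        moreover have "Jf p \<in> I" "p \<in> Jf p" "h p \<in> Jf p" using Jf h p by auto
        ultimately have "q \<in> Jf p" using conv lt by (meson less_imp_le)
        then show False using Jf p q lt by auto
      next
        case False
        then have "h q < p" using he by simp
        moreover have "Jf q \<in> I" "q \<in> Jf q" "h q \<in> Jf q" using Jf h q by auto
        ultimately have "p \<in> Jf q" using conv lt by (meson less_imp_le)
        then show False using Jf p q lt by auto
      qed
    qed
    show False using key[OF p q he be] key[OF q p he[symmetric] be[symmetric]] pq by linarith
  qed
  have "F ` P \<subseteq> H \<times> (UNIV :: bool set)" using h unfolding F_def by auto
  then have "card (F ` P) \<le> card (H \<times> (UNIV :: bool set))" using fH by (intro card_mono) auto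
  also have "\<dots> = 2 * card H" by (simp add: card_cartesian_product)
  finally show ?thesis using card_image[OF inj] by simp
qed

lemma Jset_char:
  assumes "fst l < 0" "0 \<le> fst r" "0 \<le> x"
  shows "{y. (x,y) \<in> right_part (bbox (l,r))} =
    (if x \<le> fst r then {min (snd l) (snd r) .. max (snd l) (snd r)} else {})"
  using assms by (auto simp: right_part_def bbox_def)

lemma Sup_right:
  assumes "fst l < 0" "0 \<le> fst r"
  shows "Sup (fst ` right_part (bbox (l,r))) = fst r"
proof (rule cSup_eq_maximum)
  show "fst r \<in> fst ` right_part (bbox (l,r))"
    using assms by (intro image_eqI[of _ _ r]) (auto simp: right_part_def bbox_def)
  show "\<And>y. y \<in> fst ` right_part (bbox (l,r)) \<Longrightarrow> y \<le> fst r"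
    using assms by (auto simp: right_part_def bbox_def)
qed

lemma reduce_min: "reduce_piercing I P Q \<Longrightarrow> min_piercing I Q"
  by (induction rule: reduce_piercing.induct) auto

lemma Ivals_eq:
  assumes "\<forall>pq\<in>R. {y. (x,y) \<in> right_part (bbox pq)} = {y. (x',y) \<in> right_part (bbox pq)}"
  shows "Ivals R x = Ivals R x'"
  unfolding Ivals_def using assms by blast

lemma sweep_min:
  assumes fR: "finite R" and lr: "\<forall>(l, r)\<in>R. fst l < 0 \<and> 0 \<le> fst r"
    and sw: "sweep R P" and x0: "0 \<le> x"
  shows "min_piercing (Ivals R x) (P x) \<or> P x = {}"
proof -
  define E where "E = insert 0 (events R)"
  have "events R = (\<lambda>pq. Sup (fst ` right_part (bbox pq))) ` R" unfolding events_def by (simp only: Setcompr_eq_image)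
  then have fE: "finite E" unfolding E_def using fR by simp
  have rE: "\<And>l r. (l,r) \<in> R \<Longrightarrow> fst r \<in> E"
  proof -
    fix l r assume "(l,r) \<in> R"
    then have "fst l < 0" "0 \<le> fst r" using lr by auto
    then have "fst r = Sup (fst ` right_part (bbox (l,r)))" using Sup_right by simp
    then show "fst r \<in> E" using \<open>(l,r) \<in> R\<close> unfolding E_def events_def by blast
  qed
  have s0: "min_piercing (Ivals R 0) (P 0)"
    and sI: "\<forall>x' x''. x' \<in> E \<and> x'' \<in> E \<and> x' < x'' \<and> \<not> (\<exists>e\<in>E. x' < e \<and> e < x'') \<longrightarrow>
        (\<exists>Q. reduce_piercing (Ivals R x'') (P x') Q \<and> (\<forall>x. x' < x \<and> x \<le> x'' \<longrightarrow> P x = Q))"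
    and sE: "\<forall>x. (\<forall>e\<in>E. e < x) \<longrightarrow> P x = {}"
    using sw unfolding sweep_def E_def by auto
  show ?thesis
  proof (cases "x = 0")
    case True then show ?thesis using s0 by simp
  next
    case False
    then have xp: "0 < x" using x0 by simp
    show ?thesis
    proof (cases "\<forall>e\<in>E. e < x")
      case True then show ?thesis using sE by simp
    next
      case False
      define A where "A = {e\<in>E. x \<le> e}"
      define B where "B = {e\<in>E. e < x}"
      have Ane: "A \<noteq> {}" "finite A" using False fE unfolding A_def by auto
      have Bne: "B \<noteq> {}" "finite B" using xp fE unfolding B_def E_def by auto
      define x'' where "x'' = Min A"
      define x' where "x' = Max B"
      have x''A: "x'' \<in> A" using Ane Min_in unfolding x''_def by blast
      have x'B: "x' \<in> B" using Bne Max_in unfolding x'_def by blast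
      have x''le: "\<And>e. e \<in> A \<Longrightarrow> x'' \<le> e" using Ane unfolding x''_def by auto
      have x'ge: "\<And>e. e \<in> B \<Longrightarrow> e \<le> x'" using Bne unfolding x'_def by auto
      have c1: "x' < x" "x \<le> x''" "x' \<in> E" "x'' \<in> E" using x''A x'B unfolding A_def B_def by auto
      have nb: "\<not> (\<exists>e\<in>E. x' < e \<and> e < x'')"
      proof
        assume "\<exists>e\<in>E. x' < e \<and> e < x''"
        then obtain e where e: "e \<in> E" "x' < e" "e < x''" by blast
        show False
        proof (cases "x \<le> e")
          case True then show False using x''le[of e] e unfolding A_def by auto
        next
          case False then show False using x'ge[of e] e unfolding B_def by auto
        qed
      qed
      have pre: "x' \<in> E \<and> x'' \<in> E \<and> x' < x'' \<and> \<not> (\<exists>e\<in>E. x' < e \<and> e < x'')"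
        using c1 nb by auto
      obtain Q where Q: "reduce_piercing (Ivals R x'') (P x') Q" "\<forall>y. x' < y \<and> y \<le> x'' \<longrightarrow> P y = Q"
        using sI[rule_format, OF pre] by blast
      have PQ: "P x = Q" using Q(2) c1 by auto
      have mQ: "min_piercing (Ivals R x'') Q" using reduce_min Q(1) by blast
      have "Ivals R x = Ivals R x''"
      proof (rule Ivals_eq, clarify)
        fix l r assume lrR: "(l,r) \<in> R"
        have h: "fst l < 0" "0 \<le> fst r" using lr lrR by auto
        have "x \<le> fst r \<longleftrightarrow> x'' \<le> fst r"
        proof
          assume "x \<le> fst r"
          then have "fst r \<in> A" using rE[OF lrR] unfolding A_def by auto
          then show "x'' \<le> fst r" using x''le by blast
        qed (use c1 in linarith)
        then show "{y. (x, y) \<in> right_part (bbox (l, r))} = {y. (x'', y) \<in> right_part (bbox (l, r))}"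
          using Jset_char[OF h x0] Jset_char[of l r x''] h c1 x0 by simp
      qed
      then show ?thesis using mQ PQ by simp
    qed
  qed
qed

lemma Ivals_mem:
  assumes "J \<in> Ivals R x"
  obtains l r where "(l,r) \<in> R" "J = {y. (x,y) \<in> right_part (bbox (l,r))}" "J \<noteq> {}"
proof -
  obtain pq where "pq \<in> R" "J = {y. (x,y) \<in> right_part (bbox pq)}" "J \<noteq> {}"
    using assms unfolding Ivals_def by blast
  then show ?thesis using that by (cases pq) auto
qed

theorem mainTheorem11:
  fixes R :: "(point \<times> point) set" and N :: "point set" and P :: "real \<Rightarrow> real set" and x :: real
  assumes "finite R"
    and "\<forall>(l, r)\<in>R. fst l < 0 \<and> 0 \<le> fst r"
    and "optimum_GMMN R N"
    and "sweep R P"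
    and "0 \<le> x"
  shows "card (P x) \<le> 2 * card ({z. fst z = x} \<inter> (hor_part N \<inter> {z. 0 \<le> fst z}))"
proof -
  define H where "H = {z. fst z = x} \<inter> (hor_part N \<inter> {z. 0 \<le> fst z})"
  have rn: "rect_network N" and mp: "\<forall>(p,q)\<in>R. has_M_path N p q"
    using assms(3) unfolding optimum_GMMN_def feasible_GMMN_def by auto
  have fH: "finite H" using finite_hor[OF rn, of x] unfolding H_def
    by (rule finite_subset[rotated]) blast
  show ?thesis
  proof (cases "P x = {}")
    case True then show ?thesis by simp
  next
    case False
    then have mpx: "min_piercing (Ivals R x) (P x)" using sweep_min assms(1,2,4,5) by blast
    have hit: "\<forall>J\<in>Ivals R x. J \<inter> snd ` H \<noteq> {}"
    proof
      fix J assume "J \<in> Ivals R x"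
      then obtain l r where lrR: "(l,r) \<in> R" and J: "J = {y. (x,y) \<in> right_part (bbox (l,r))}" and Jne: "J \<noteq> {}"
        by (rule Ivals_mem)
      have h: "fst l < 0" "0 \<le> fst r" using assms(2) lrR by auto
      have xr: "x \<le> fst r" using Jne J Jset_char[OF h assms(5)] by (simp split: if_splits)
      obtain vs where "M_path N l r vs" using mp lrR unfolding has_M_path_def by auto
      then obtain y where y: "(x,y) \<in> hor_part N" "min (snd l) (snd r) \<le> y" "y \<le> max (snd l) (snd r)"
        using mpath_cross[of N l r vs x] h xr assms(5) by auto
      have "y \<in> J" using J Jset_char[OF h assms(5)] xr y by simp
      moreover have "y \<in> snd ` H" unfolding H_def using y(1) assms(5) by (intro image_eqI[of _ _ "(x,y)"]) auto
      ultimately show "J \<inter> snd ` H \<noteq> {}" by blast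
    qed
    have conv: "\<forall>J\<in>Ivals R x. \<forall>a\<in>J. \<forall>b\<in>J. \<forall>c. a \<le> c \<and> c \<le> b \<longrightarrow> c \<in> J"
    proof (intro ballI allI impI)
      fix J a b c assume JI: "J \<in> Ivals R x" and a: "a \<in> J" and b: "b \<in> J" and c: "a \<le> c \<and> c \<le> b"
      then obtain l r where lrR: "(l,r) \<in> R" and J: "J = {y. (x,y) \<in> right_part (bbox (l,r))}"
        using Ivals_mem[OF JI] by metis
      have h: "fst l < 0" "0 \<le> fst r" using assms(2) lrR by auto
      show "c \<in> J" using a b c J Jset_char[OF h assms(5)] by (simp split: if_splits)
    qed
    have "card (P x) \<le> 2 * card (snd ` H)" using minpierce_bound[OF mpx _ hit conv] fH by simp
    also have "\<dots> \<le> 2 * card H" using card_image_le[OF fH, of snd] by simp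
    finally show ?thesis unfolding H_def .
  qed
qed

end
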